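(* Let $h,l_1,l_2$ be integers and $g\ge 3$ an integer with $l_1-l_2\ge 2$. Put $Q=(l_2,h-l_2)$, $P=(l_1,h-l_1)$ and $R=(k,h-l_2)$ where $k=l_2+g$ (so $R$ lies on the line $X+Y=h+g$ and has the same $Y$-coordinate as $Q$). Then $${}_{Q}N_{P}^{R}=\binom{g-2}{k-l_1}.$$
   Context: Let $\Sigma=\{a,b\}$. A lattice path is a finite sequence of points of $\mathbb Z^2$ in which each consecutive difference is $(1,0)$ (an east step) or $(0,1)$ (a north step). The word $w(p)\in\Sigma^*$ of a lattice path $p$ records its steps in order, writing $a$ for an east step and $b$ for a north step; conversely, for a point $A\in\mathbb Z^2$ and a word $w$, $p_A(w)$ is the lattice path starting at $A$ whose word is $w$. For lattice paths $p,q$, $p\cap q$ denotes the set of lattice points lying on both. For distinct lattice points $A,B,C$, ${}_{A}\mathcal N_{B}^{C}$ is the set of triples $(p,q,p')$ where $p$ is a lattice path from $A$ to $C$, $q$ is a lattice path from $B$ to $C$, $p'=p_B(w(p))$, $p\cap q=\{C\}$ and $q\cap p'=\{B\}$; and ${}_{A}N_{B}^{C}=|{}_{A}\mathcal N_{B}^{C}|$. Binomial coefficients $\binom{N}{r}$ are $0$ when $r<0$ or $r>N$. *)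

theory Defs
  imports Main
begin

type_synonym point = "int \<times> int"

datatype letter = La | Lb

definition east :: "point \<Rightarrow> point" where
  "east A = (fst A + 1, snd A)"
definition north :: "point \<Rightarrow> point" where
  "north A = (fst A, snd A + 1)"

definition lattice_path :: "point list \<Rightarrow> bool" where
  "lattice_path p \<longleftrightarrow> p \<noteq> [] \<and>
     (\<forall>i. Suc i < length p \<longrightarrow> (p ! Suc i = east (p ! i) \<or> p ! Suc i = north (p ! i)))"

fun word_of :: "point list \<Rightarrow> letter list" where
  "word_of (x # y # ps) = (if y = east x then La else Lb) # word_of (y # ps)"
| "word_of _ = []"

fun path_of :: "point \<Rightarrow> letter list \<Rightarrow> point list" where
  "path_of A [] = [A]"
| "path_of A (La # w) = A # path_of (east A) w"
| "path_of A (Lb # w) = A # path_of (north A) w"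

definition Ntriples :: "point \<Rightarrow> point \<Rightarrow> point \<Rightarrow> (point list \<times> point list \<times> point list) set" where
  "Ntriples A B C = {(p, q, p'). lattice_path p \<and> hd p = A \<and> last p = C \<and>
      lattice_path q \<and> hd q = B \<and> last q = C \<and>
      p' = path_of B (word_of p) \<and>
      set p \<inter> set q = {C} \<and> set q \<inter> set p' = {B}}"

definition Ncount :: "point \<Rightarrow> point \<Rightarrow> point \<Rightarrow> nat" where
  "Ncount A B C = card (Ntriples A B C)"

definition ibinom :: "int \<Rightarrow> int \<Rightarrow> nat" where
  "ibinom N r = (if 0 \<le> r \<and> r \<le> N then nat N choose nat r else 0)"

end

theory Submission
  imports Defs
begin

definition ca :: "letter list \<Rightarrow> nat" where "ca w = length (filter (\<lambda>c. c = La) w)"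
definition cb :: "letter list \<Rightarrow> nat" where "cb w = length (filter (\<lambda>c. c = Lb) w)"

lemma ca_simps[simp]: "ca [] = 0" "ca (La # w) = Suc (ca w)" "ca (Lb # w) = ca w"
  "ca (w @ v) = ca w + ca v" by (auto simp: ca_def)
lemma cb_simps[simp]: "cb [] = 0" "cb (La # w) = cb w" "cb (Lb # w) = Suc (cb w)"
  "cb (w @ v) = cb w + cb v" by (auto simp: cb_def)

lemma len_ca_cb: "length w = ca w + cb w"
proof (induction w)
  case (Cons c w) then show ?case by (cases c) auto
qed simp

lemma path_of_Cons: "path_of A w = A # tl (path_of A w)"
  by (cases "(A,w)" rule: path_of.cases) auto

lemma hd_path_of[simp]: "hd (path_of A w) = A"
  by (subst path_of_Cons) simp

lemma path_of_ne[simp]: "path_of A w \<noteq> []"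
  by (subst path_of_Cons) simp

lemma east_ne_north[simp]: "east A \<noteq> north A" "north A \<noteq> east A"
  by (auto simp: east_def north_def prod_eq_iff)

lemma last_path_of: "last (path_of A w) = (fst A + int (ca w), snd A + int (cb w))"
proof (induction w arbitrary: A)
  case Nil then show ?case by simp
next
  case (Cons c w) then show ?case
    by (cases c) (auto simp: east_def north_def)
qed

lemma word_of_path_of[simp]: "word_of (path_of A w) = w"
proof (induction w arbitrary: A)
  case Nil then show ?case by simp
next
  case (Cons c w)
  show ?case
  proof (cases c)
    case La
    have "word_of (path_of A (c # w)) = word_of (A # east A # tl (path_of (east A) w))"
      using La by (simp, subst path_of_Cons, simp)
    also have "\<dots> = La # word_of (path_of (east A) w)"
      by (simp, subst (2) path_of_Cons, simp)
    finally show ?thesis using Cons La by simp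
  next
    case Lb
    have "word_of (path_of A (c # w)) = word_of (A # north A # tl (path_of (north A) w))"
      using Lb by (simp, subst path_of_Cons, simp)
    also have "\<dots> = Lb # word_of (path_of (north A) w)"
      by (simp, subst (2) path_of_Cons, simp)
    finally show ?thesis using Cons Lb by simp
  qed
qed

lemma lattice_path_single[simp]: "lattice_path [x]"
  by (simp add: lattice_path_def)

lemma lattice_path_Cons2:
  "lattice_path (x # y # ps) \<longleftrightarrow> (y = east x \<or> y = north x) \<and> lattice_path (y # ps)"
proof
  assume h: "lattice_path (x # y # ps)"
  have h2: "(x # y # ps) ! Suc i = east ((x # y # ps) ! i) \<or> (x # y # ps) ! Suc i = north ((x # y # ps) ! i)"
    if "Suc i < length (x # y # ps)" for i using h that unfolding lattice_path_def by blast
  show "(y = east x \<or> y = north x) \<and> lattice_path (y # ps)"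
    unfolding lattice_path_def using h2[of 0] h2[of "Suc _"] by auto
next
  assume h: "(y = east x \<or> y = north x) \<and> lattice_path (y # ps)"
  show "lattice_path (x # y # ps)" unfolding lattice_path_def
  proof (intro conjI allI impI)
    fix i assume "Suc i < length (x # y # ps)"
    then show "(x # y # ps) ! Suc i = east ((x # y # ps) ! i) \<or> (x # y # ps) ! Suc i = north ((x # y # ps) ! i)"
      using h unfolding lattice_path_def by (cases i) auto
  qed simp
qed

lemma lattice_path_path_of[simp]: "lattice_path (path_of A w)"
proof (induction w arbitrary: A)
  case Nil then show ?case by simp
next
  case (Cons c w)
  have e: "path_of B w = B # tl (path_of B w)" for B by (rule path_of_Cons)
  show ?case
  proof (cases c)
    case La
    have "lattice_path (east A # tl (path_of (east A) w))" using Cons.IH[of "east A"] e[of "east A"] by metis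
    then have "lattice_path (A # east A # tl (path_of (east A) w))" by (simp add: lattice_path_Cons2)
    then show ?thesis using La e[of "east A"] by simp
  next
    case Lb
    have "lattice_path (north A # tl (path_of (north A) w))" using Cons.IH[of "north A"] e[of "north A"] by metis
    then have "lattice_path (A # north A # tl (path_of (north A) w))" by (simp add: lattice_path_Cons2)
    then show ?thesis using Lb e[of "north A"] by simp
  qed
qed

lemma path_of_word_of: "lattice_path p \<Longrightarrow> path_of (hd p) (word_of p) = p"
proof (induction p rule: word_of.induct)
  case (1 x y ps)
  then have ih: "path_of y (word_of (y # ps)) = y # ps" and yy: "y = east x \<or> y = north x"
    by (auto simp: lattice_path_Cons2)
  show ?case using ih yy by auto
next
  case ("2_1") then show ?case by (simp add: lattice_path_def)
next
  case ("2_2" v) then show ?case by simp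
qed

lemma path_of_bounds: "x \<in> set (path_of A w) \<Longrightarrow>
  fst A \<le> fst x \<and> snd A \<le> snd x \<and> fst x \<le> fst A + int (ca w) \<and> snd x \<le> snd A + int (cb w)"
proof (induction w arbitrary: A)
  case Nil then show ?case by simp
next
  case (Cons c w) then show ?case
    by (cases c) (fastforce simp: east_def north_def)+
qed

lemma path_of_append_subset: "set (path_of A w) \<subseteq> set (path_of A (w @ w2))"
proof (induction w arbitrary: A)
  case Nil then show ?case by (subst path_of_Cons) auto
next
  case (Cons c w) then show ?case by (cases c) (simp_all add: subset_insertI2 Cons.IH)
qed

lemma path_of_snoc_Lb: "set (path_of A (w @ [Lb])) = insert (north (last (path_of A w))) (set (path_of A w))"
proof (induction w arbitrary: A)
  case Nil then show ?case by auto
next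
  case (Cons c w) then show ?case by (cases c) auto
qed

lemma path_of_rep: "set (path_of A (replicate n La)) = {(fst A + int i, snd A) | i. i \<le> n}"
proof (induction n arbitrary: A)
  case 0 then show ?case by auto
next
  case (Suc n)
  have "set (path_of A (replicate (Suc n) La)) = insert A {(fst A + 1 + int i, snd A) | i. i \<le> n}"
    using Suc by (simp add: east_def)
  also have "\<dots> = {(fst A + int i, snd A) | i. i \<le> Suc n}"
  proof (intro equalityI subsetI)
    fix x assume "x \<in> insert A {(fst A + 1 + int i, snd A) | i. i \<le> n}"
    then show "x \<in> {(fst A + int i, snd A) | i. i \<le> Suc n}"
    proof
      assume "x = A" then show ?thesis by (intro CollectI exI[of _ 0]) auto
    next
      assume "x \<in> {(fst A + 1 + int i, snd A) | i. i \<le> n}"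
      then obtain i where "x = (fst A + 1 + int i, snd A)" "i \<le> n" by auto
      then show ?thesis by (intro CollectI exI[of _ "Suc i"]) auto
    qed
  next
    fix x assume "x \<in> {(fst A + int i, snd A) | i. i \<le> Suc n}"
    then obtain i where i: "x = (fst A + int i, snd A)" "i \<le> Suc n" by auto
    show "x \<in> insert A {(fst A + 1 + int i, snd A) | i. i \<le> n}"
    proof (cases i)
      case 0 then show ?thesis using i by simp
    next
      case (Suc j) then show ?thesis using i by auto
    qed
  qed
  finally show ?case .
qed

lemma cb0_rep: "cb u = 0 \<Longrightarrow> u = replicate (ca u) La"
proof (induction u)
  case (Cons c u) then show ?case by (cases c) auto
qed simp

lemma finite_letter_UNIV: "finite (UNIV :: letter set)"
proof -
  have "(UNIV :: letter set) = {La, Lb}" by (auto intro: letter.exhaust)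
  then show ?thesis by (metis finite.emptyI finite.insertI)
qed

lemma fin_len: "finite {xs :: letter list. length xs = n}"
  using finite_lists_length_eq[OF finite_letter_UNIV, of n] by simp

lemma split_words: "{w. length w = Suc n \<and> ca w = a} =
   Cons La ` {w. length w = n \<and> Suc (ca w) = a} \<union> Cons Lb ` {w. length w = n \<and> ca w = a}"
proof (intro equalityI subsetI)
  fix x assume "x \<in> {w. length w = Suc n \<and> ca w = a}"
  then obtain c y where x: "x = c # y" "length y = n" "ca x = a" by (cases x) auto
  then show "x \<in> Cons La ` {w. length w = n \<and> Suc (ca w) = a} \<union> Cons Lb ` {w. length w = n \<and> ca w = a}"
    by (cases c) auto
qed auto

lemma card_words: "card {w. length w = n \<and> ca w = a} = n choose a"
proof (induction n arbitrary: a)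
  case 0
  have "{w. length w = 0 \<and> ca w = a} = (if a = 0 then {[]} else {})" by auto
  then show ?case by simp
next
  case (Suc n)
  have fin: "finite {w :: letter list. length w = n \<and> P w}" for P
    by (rule finite_subset[OF _ fin_len[of n]]) auto
  have "card {w. length w = Suc n \<and> ca w = a} =
     card {w. length w = n \<and> Suc (ca w) = a} + card {w. length w = n \<and> ca w = a}"
    unfolding split_words
    by (subst card_Un_disjoint) (auto simp: fin card_image)
  moreover have "card {w. length w = n \<and> Suc (ca w) = a} = (if a = 0 then 0 else n choose (a - 1))"
  proof (cases a)
    case 0 then show ?thesis by simp
  next
    case (Suc a') then show ?thesis using Suc.IH[of a'] by simp
  qed
  ultimately show ?case using Suc.IH[of a] by (cases a) auto
qed

lemma ca_rep[simp]: "ca (replicate m La) = m" and cb_rep[simp]: "cb (replicate m La) = 0"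
  by (induction m) auto

lemma self_in_path_of[simp]: "A \<in> set (path_of A w)"
  by (subst path_of_Cons) simp

lemma last_in_path_of[simp]: "last (path_of A w) \<in> set (path_of A w)"
  by (rule last_in_set) simp

theorem mainTheorem7:
  fixes h l1 l2 g k :: int
  assumes "g \<ge> 3" and "l1 - l2 \<ge> 2" and "k = l2 + g"
  shows "Ncount (l2, h - l2) (l1, h - l1) (k, h - l2) = ibinom (g - 2) (k - l1)"
proof -
  define n where "n = nat g"
  define Q where "Q = (l2, h - l2)"
  define P where "P = (l1, h - l1)"
  define R where "R = (k, h - l2)"
  define pp where "pp = path_of Q (replicate n La)"
  define pp' where "pp' = path_of P (replicate n La)"
  define F where "F w = (pp, path_of P (Lb # w @ [Lb]), pp')" for w
  define W where "W = {w. int (ca w) = k - l1 \<and> int (cb w) = l1 - l2 - 2}"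
  have gn: "int n = g" using assms by (simp add: n_def)
  have spp: "set pp = {(l2 + int i, h - l2) | i. i \<le> n}" by (simp add: pp_def path_of_rep Q_def)
  have spp': "set pp' = {(l1 + int i, h - l1) | i. i \<le> n}" by (simp add: pp'_def path_of_rep P_def)
  have lastpp: "last pp = R" using gn assms by (simp add: pp_def last_path_of Q_def R_def)
  have eq: "Ntriples Q P R = F ` W"
  proof (intro equalityI subsetI)
    fix t assume "t \<in> Ntriples Q P R"
    then obtain p q p' where t: "t = (p,q,p')" and lp: "lattice_path p" "hd p = Q" "last p = R"
      "lattice_path q" "hd q = P" "last q = R" "p' = path_of P (word_of p)"
      and i1: "set p \<inter> set q = {R}" and i2: "set q \<inter> set p' = {P}"
      unfolding Ntriples_def by blast
    define u where "u = word_of p"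
    define v where "v = word_of q"
    have pu: "p = path_of Q u" using path_of_word_of lp u_def by metis
    have qv: "q = path_of P v" using path_of_word_of lp v_def by metis
    have "last (path_of Q u) = R" using pu lp by simp
    then have cau: "int (ca u) = g" and cbu: "cb u = 0" using assms by (auto simp: last_path_of Q_def R_def)
    then have "ca u = n" using gn by simp
    then have "u = replicate n La" using cb0_rep[OF cbu] by simp
    moreover have uw: "word_of p = u" by (simp add: u_def)
    ultimately have ppp: "p = pp" "p' = pp'" using pu lp(7) by (simp_all add: pp_def pp'_def)
    have "last (path_of P v) = R" using qv lp by simp
    then have cav: "int (ca v) = k - l1" and cbv: "int (cb v) = l1 - l2"
      by (auto simp: last_path_of P_def R_def)
    obtain c v1 where v: "v = c # v1" using cbv assms by (cases v) auto
    have c: "c = Lb"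
    proof (rule ccontr)
      assume "c \<noteq> Lb" then have "c = La" by (cases c) auto
      then have "east P \<in> set q" using qv v by simp
      moreover have "east P \<in> set pp'" unfolding spp' using gn assms
        by (auto simp: east_def P_def intro!: exI[of _ 1])
      ultimately have "east P \<in> {P}" using i2 ppp by blast
      then show False by (simp add: east_def P_def)
    qed
    obtain v2 d where v1: "v1 = v2 @ [d]" using cbv assms v c by (cases v1 rule: rev_cases) auto
    have d: "d = Lb"
    proof (rule ccontr)
      assume "d \<noteq> Lb" then have dl: "d = La" by (cases d) auto
      define X where "X = last (path_of P (Lb # v2))"
      have Xin: "X \<in> set (path_of P (Lb # v2))" by (simp only: X_def last_in_path_of)
      have vv: "v = (Lb # v2) @ [La]" using v c v1 dl by simp
      have "X \<in> set q" by (simp only: qv vv) (rule subsetD[OF path_of_append_subset Xin])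
      moreover have X: "X = (k - 1, h - l2)" using cav cbv v c v1 dl
        by (simp add: X_def last_path_of P_def north_def)
      moreover have "X \<in> set pp" unfolding spp X using gn assms
        by (auto intro!: exI[of _ "n - 1"])
      ultimately have "X \<in> {R}" using i1 ppp by blast
      then show False using X by (simp add: R_def)
    qed
    have "v2 \<in> W" using cav cbv v c v1 d by (auto simp: W_def)
    moreover have "t = F v2" using t ppp qv v c v1 d by (simp add: F_def)
    ultimately show "t \<in> F ` W" by blast
  next
    fix t assume "t \<in> F ` W"
    then obtain w where w: "w \<in> W" "t = F w" by blast
    have cw: "int (ca w) = k - l1" "int (cb w) = l1 - l2 - 2" using w W_def by auto
    define q where "q = path_of P (Lb # w @ [Lb])"
    have lq: "last q = R" using cw by (simp add: q_def last_path_of P_def R_def north_def)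
    have sq: "set q = insert P (insert (north (last (path_of (north P) w))) (set (path_of (north P) w)))"
      by (simp add: q_def path_of_snoc_Lb)
    have b1: "snd x \<le> h - l2 - 1 \<and> snd x \<ge> h - l1 + 1" if "x \<in> set (path_of (north P) w)" for x
      using path_of_bounds[OF that] cw by (auto simp: north_def P_def)
    have nl: "north (last (path_of (north P) w)) = R" using cw
      by (simp add: last_path_of north_def P_def R_def)
    have I1: "set pp \<inter> set q = {R}"
    proof (intro equalityI subsetI)
      fix x assume x: "x \<in> set pp \<inter> set q"
      then have sx: "snd x = h - l2" unfolding spp by auto
      show "x \<in> {R}"
      proof (cases "x \<in> set (path_of (north P) w)")
        case True then show ?thesis using b1[OF True] sx by simp
      next
        case False then show ?thesis using x sq nl sx assms by (auto simp: P_def)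
      qed
    next
      fix x assume "x \<in> {R}"
      then show "x \<in> set pp \<inter> set q" using sq nl lastpp last_in_path_of[of Q "replicate n La"]
        by (auto simp: pp_def)
    qed
    have I2: "set q \<inter> set pp' = {P}"
    proof (intro equalityI subsetI)
      fix x assume x: "x \<in> set q \<inter> set pp'"
      then have sx: "snd x = h - l1" unfolding spp' by auto
      show "x \<in> {P}"
      proof (cases "x \<in> set (path_of (north P) w)")
        case True then show ?thesis using b1[OF True] sx by simp
      next
        case False then show ?thesis using x sq nl sx assms by (auto simp: R_def)
      qed
    next
      fix x assume "x \<in> {P}"
      then show "x \<in> set q \<inter> set pp'" using sq by (auto simp: pp'_def)
    qed
    have Fw: "t = (pp, q, pp')" by (simp add: w F_def q_def)
    have f1: "lattice_path pp" "lattice_path q" "hd pp = Q" "hd q = P"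
      by (simp_all only: pp_def q_def lattice_path_path_of hd_path_of)
    have f2: "pp' = path_of P (word_of pp)" by (simp add: pp_def pp'_def)
    show "t \<in> Ntriples Q P R" unfolding Ntriples_def Fw
      using I1 I2 lq lastpp f1 f2 by auto
  qed
  have inj: "inj_on F W"
  proof (rule inj_onI)
    fix w w' assume "F w = F w'"
    then have "path_of P (Lb # w @ [Lb]) = path_of P (Lb # w' @ [Lb])"
      by (simp only: F_def prod.inject)
    then have "word_of (path_of P (Lb # w @ [Lb])) = word_of (path_of P (Lb # w' @ [Lb]))"
      by (rule arg_cong)
    then have "Lb # w @ [Lb] = Lb # w' @ [Lb]" by (simp only: word_of_path_of)
    then show "w = w'" by simp
  qed
  have "Ncount Q P R = card W" by (simp add: Ncount_def eq card_image[OF inj])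
  also have "card W = ibinom (g - 2) (k - l1)"
  proof (cases "k - l1 \<ge> 0")
    case True
    define a where "a = nat (k - l1)"
    define b where "b = nat (l1 - l2 - 2)"
    have "W = {w. length w = a + b \<and> ca w = a}"
      using True assms by (auto simp: W_def a_def b_def len_ca_cb)
    then have "card W = (a + b) choose a" by (simp add: card_words)
    moreover have "nat (g - 2) = a + b" using True assms by (simp add: a_def b_def)
    ultimately show ?thesis using True assms by (simp add: ibinom_def a_def)
  next
    case False
    then have "W = {}" by (auto simp: W_def)
    then show ?thesis using False by (simp add: ibinom_def)
  qed
  finally show ?thesis by (simp add: Q_def P_def R_def)
qed

end
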